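(* Let $\mathcal{U}\subset\mathbb{R}^n\times\mathbb{R}^p$ be open, let $\mathcal{D}\subset\mathcal{U}$ be nonempty, let $\Gamma:\mathcal{D}\times\mathbb{R}^m\rightrightarrows\mathbb{R}^q$ be such that $\Gamma(\xi,\cdot)$ is positively homogeneous for every $\xi\in\mathcal{D}$, let $\mathcal{A}:\mathcal{U}\to\mathbb{R}^{q\times m}$, and define $\varXi:\mathcal{D}\times\mathbb{R}^m\rightrightarrows\mathbb{R}^q$ by $\varXi(\xi,z):=\mathcal{A}(\xi)z+\Gamma(\xi,z)$. Let $\bar\xi\in\mathcal{D}$ and $\omega\in\mathbb{R}^n\times\mathbb{R}^p$, put $H:=\Gamma(\bar\xi,\cdot)$, $\mathcal{Z}:=\mathrm{bd}\,\mathbb{B}\cap\mathrm{dom}\,H$, $\mathcal{Z}_0:=\{z\in\mathcal{Z}\mid 0\in\mathcal{A}(\bar\xi)z+H(z)\}$ and $\varTheta:=\mathrm{cl}\big(\mathrm{cone}\big(\bigcup_{z\in\mathcal{Z}}H(z)\big)\big)$, and assume: (i) $\bar\xi$ is $\varXi$-singular; (ii) $\Gamma$ is outer semicontinuous; (iii) $\mathcal{A}$ is semidifferentiable at $\bar\xi$ for $\omega$; (iv) the set $\mathcal{A}(\bar\xi)\,\mathrm{dom}\,H$ is closed; (v) there exists $c\ge0$ such that for every $z\in\mathcal{Z}_0$ there are $\varepsilon,\delta>0$ with $\Gamma(\xi,z')\cap\delta\mathbb{B}\subset\Gamma(\bar\xi,z')+c\|\xi-\bar\xi\|\mathbb{B}$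 whenever $(\xi,z')\in(\mathcal{D}\times\mathrm{bd}\,\mathbb{B})\cap((\bar\xi,z)+\varepsilon\mathbb{B})$; (vi) $\big(\mathcal{A}(\bar\xi)\,\mathrm{dom}\,H\big)\cap(-\varTheta)\subset\{0\}$. Then, with $c\ge0$ from (v), \[ d\ell_\varXi(\bar\xi)(\omega)+c\|\omega\|\ \ge\ \min_{z\in\mathcal{Z}_0}\mathrm{dist}\big[0,\ \mathcal{A}'(\bar\xi;\omega)z+\varTheta+\mathcal{A}(\bar\xi)\,\mathrm{dom}\,H\big]. \]
   Context: $\|\cdot\|$ is the Euclidean norm, $\mathbb{B}$ the closed unit ball, $\mathrm{bd}$ the boundary, $\mathrm{cl}$ the closure, $\mathrm{dist}[\xi,Z]$ the distance (with $\mathrm{dist}[\xi,\emptyset]=\infty$), and $\mathrm{cone}(Z):=\bigcup_{\gamma\ge0}\gamma Z$. A set-valued map $H$ is positively homogeneous if $H(\gamma z)=\gamma H(z)$ for all $\gamma>0$ and all $z$. $\Gamma$ is outer semicontinuous if $\limsup_{(\xi',z')\to(\xi,z),\,(\xi',z')\in\mathcal{D}\times\mathbb{R}^m}\Gamma(\xi',z')\subset\Gamma(\xi,z)$ (Painlevé–Kuratowski outer limit) for all $(\xi,z)\in\mathcal{D}\times\mathbb{R}^m$. The least singular value (LSV) function of $\varXi$ is $\ell_\varXi:\mathbb{R}^n\times\mathbb{R}^p\to[0,\infty]$, $\ell_\varXi(\xi):=\infty$ if $\xi\notin\mathcal{D}$ and $\ell_\varXi(\xi):=\inf_{\|z\|=1}\mathrm{dist}[0,\varXi(\xi,z)]$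 if $\xi\in\mathcal{D}$. A point $\bar\xi\in\mathcal{D}$ is $\varXi$-singular if $0\in\varXi(\bar\xi,z)$ for some $z\neq0$. The semiderivative of a single-valued map $\mathcal{A}$ at $\xi\in\mathrm{int}(\mathrm{dom}\,\mathcal{A})$ for $\omega$ is $\mathcal{A}'(\xi;\omega):=\lim_{\tau\searrow0,\omega'\to\omega}(\mathcal{A}(\xi+\tau\omega')-\mathcal{A}(\xi))/\tau$; $\mathcal{A}$ is semidifferentiable at $\xi$ for $\omega$ if this limit exists. The subderivative of $\varphi:\mathbb{R}^N\to\mathbb{R}\cup\{\infty\}$ at $\xi\in\mathrm{dom}\,\varphi$ in direction $\omega$ is $d\varphi(\xi)(\omega):=\liminf_{\tau\searrow0,\omega'\to\omega}(\varphi(\xi+\tau\omega')-\varphi(\xi))/\tau$. *)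

theory Defs
  imports "HOL-Analysis.Analysis" "HOL-Library.Liminf_Limsup"
begin

definition set_dist :: "'a::metric_space \<Rightarrow> 'a set \<Rightarrow> ereal" where
  "set_dist x Z = (if Z = {} then \<infinity> else ereal (infdist x Z))"

definition cone_of :: "'a::real_vector set \<Rightarrow> 'a set" where
  "cone_of Z = (\<Union>\<gamma>\<in>{0..}. (\<lambda>x. \<gamma> *\<^sub>R x) ` Z)"

definition sv_dom :: "('a \<Rightarrow> 'b set) \<Rightarrow> 'a set" where
  "sv_dom H = {z. H z \<noteq> {}}"

definition pos_homogeneous :: "('a::real_vector \<Rightarrow> 'b::real_vector set) \<Rightarrow> bool" where
  "pos_homogeneous H \<longleftrightarrow> (\<forall>\<gamma>>0. \<forall>z. H (\<gamma> *\<^sub>R z) = (\<lambda>y. \<gamma> *\<^sub>R y) ` H z)"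

definition outer_semicontinuous_on ::
  "'x::metric_space set \<Rightarrow> ('x \<Rightarrow> 'z::metric_space \<Rightarrow> 'y::metric_space set) \<Rightarrow> bool" where
  "outer_semicontinuous_on D \<Gamma> \<longleftrightarrow>
     (\<forall>\<xi>\<in>D. \<forall>z y. (\<exists>\<xi>s zs ys. (\<forall>k. \<xi>s k \<in> D \<and> ys k \<in> \<Gamma> (\<xi>s k) (zs k)) \<and>
          \<xi>s \<longlonglongrightarrow> \<xi> \<and> zs \<longlonglongrightarrow> z \<and> ys \<longlonglongrightarrow> y) \<longrightarrow> y \<in> \<Gamma> \<xi> z)"

definition Xi_map ::
  "('x \<Rightarrow> real^'m^'q) \<Rightarrow> ('x \<Rightarrow> real^'m \<Rightarrow> (real^'q) set) \<Rightarrow> 'x \<Rightarrow> real^'m \<Rightarrow> (real^'q) set" where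
  "Xi_map A \<Gamma> \<xi> z = (\<lambda>y. A \<xi> *v z + y) ` \<Gamma> \<xi> z"

definition lsv ::
  "'x set \<Rightarrow> ('x \<Rightarrow> real^'m \<Rightarrow> (real^'q) set) \<Rightarrow> 'x \<Rightarrow> ereal" where
  "lsv D \<Xi> \<xi> = (if \<xi> \<notin> D then \<infinity> else (INF z\<in>sphere 0 1. set_dist 0 (\<Xi> \<xi> z)))"

definition singular_point ::
  "'x set \<Rightarrow> ('x \<Rightarrow> real^'m \<Rightarrow> (real^'q) set) \<Rightarrow> 'x \<Rightarrow> bool" where
  "singular_point D \<Xi> \<xi> \<longleftrightarrow> \<xi> \<in> D \<and> (\<exists>z. z \<noteq> 0 \<and> 0 \<in> \<Xi> \<xi> z)"

definition semi_filter :: "'x::real_normed_vector \<Rightarrow> (real \<times> 'x) filter" where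
  "semi_filter \<omega> = at (0, \<omega>) within ({0<..} \<times> UNIV)"

definition semidifferentiable_at ::
  "('x::real_normed_vector \<Rightarrow> 'v::real_normed_vector) \<Rightarrow> 'x \<Rightarrow> 'x \<Rightarrow> bool" where
  "semidifferentiable_at A \<xi> \<omega> \<longleftrightarrow>
     (\<exists>L. ((\<lambda>(\<tau>, \<omega>'). (1 / \<tau>) *\<^sub>R (A (\<xi> + \<tau> *\<^sub>R \<omega>') - A \<xi>)) \<longlongrightarrow> L) (semi_filter \<omega>))"

definition semiderivative ::
  "('x::real_normed_vector \<Rightarrow> 'v::real_normed_vector) \<Rightarrow> 'x \<Rightarrow> 'x \<Rightarrow> 'v" where
  "semiderivative A \<xi> \<omega> =
     (THE L. ((\<lambda>(\<tau>, \<omega>'). (1 / \<tau>) *\<^sub>R (A (\<xi> + \<tau> *\<^sub>R \<omega>') - A \<xi>)) \<longlongrightarrow> L) (semi_filter \<omega>))"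

definition subderivative ::
  "('x::real_normed_vector \<Rightarrow> ereal) \<Rightarrow> 'x \<Rightarrow> 'x \<Rightarrow> ereal" where
  "subderivative \<phi> \<xi> \<omega> =
     Liminf (semi_filter \<omega>) (\<lambda>(\<tau>, \<omega>'). (\<phi> (\<xi> + \<tau> *\<^sub>R \<omega>') - \<phi> \<xi>) / ereal \<tau>)"

end

theory Submission
  imports Defs
begin

lemma scaleR_mv: fixes A :: "real^'m^'q" shows "(c *\<^sub>R A) *v x = c *\<^sub>R (A *v x)"
  by (simp add: matrix_vector_mult_def vec_eq_iff sum_distrib_left mult.assoc)

lemma norm_mv_le: fixes A :: "real^'m^'q" shows "norm (A *v x) \<le> norm A * norm x * real CARD('q)"
proof -
  have "norm (A *v x) \<le> (\<Sum>i\<in>UNIV. \<bar>(A *v x) $ i\<bar>)" by (rule norm_le_l1_cart)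
  also have "\<dots> \<le> (\<Sum>i::'q\<in>UNIV. norm A * norm x)"
  proof (rule sum_mono)
    fix i
    have "\<bar>(A *v x) $ i\<bar> \<le> norm(A $ i) * norm x"
      by (simp add: matrix_mult_dot Cauchy_Schwarz_ineq2)
    also have "\<dots> \<le> norm A * norm x"
      by (intro mult_right_mono) (auto simp: Finite_Cartesian_Product.norm_nth_le)
    finally show "\<bar>(A *v x) $ i\<bar> \<le> norm A * norm x" .
  qed
  finally show ?thesis by (simp add: mult.commute)
qed

lemma bb_mv: "bounded_bilinear (\<lambda>(A::real^'m^'q) x. A *v x)"
  apply (rule bounded_bilinear.intro)
  apply (auto simp: algebra_simps scaleR_mv)
  by (metis norm_mv_le mult.commute)

lemma tendsto_mv:
  fixes A :: "'a \<Rightarrow> real^'m^'q"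
  assumes "(A \<longlongrightarrow> A0) F" "(x \<longlongrightarrow> x0) F"
  shows "((\<lambda>k. A k *v x k) \<longlongrightarrow> A0 *v x0) F"
  using bounded_bilinear.tendsto[OF bb_mv assms] by simp

lemma infdist_shift: fixes a :: "'a::real_normed_vector"
  shows "infdist 0 ((\<lambda>x. a + x) ` T) = infdist (-a) T"
proof (cases "T = {}")
  case True then show ?thesis by (simp add: infdist_def)
next
  case False
  have "\<And>x. dist 0 (a + x) = dist (-a) x"
    by (simp add: dist_norm)
  then show ?thesis using False by (simp add: infdist_notempty image_comp o_def)
qed

lemma zero_in_shift: "(0::'a::ab_group_add) \<in> (\<lambda>y. a + y) ` S \<longleftrightarrow> -a \<in> S"
  by (auto simp: image_iff) (metis add.commute add_eq_0_iff2)+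


theorem theorem2:
  fixes U D :: "((real^'n) \<times> (real^'p)) set"
    and \<Gamma> :: "(real^'n) \<times> (real^'p) \<Rightarrow> real^'m \<Rightarrow> (real^'q) set"
    and A :: "(real^'n) \<times> (real^'p) \<Rightarrow> real^'m^'q"
    and \<xi>bar \<omega> :: "(real^'n) \<times> (real^'p)"
    and c :: real
  assumes U_open: "open U"
    and D_sub: "D \<subseteq> U" and D_ne: "D \<noteq> {}"
    and hom: "\<forall>\<xi>\<in>D. pos_homogeneous (\<Gamma> \<xi>)"
    and xibar: "\<xi>bar \<in> D"
    and i: "singular_point D (Xi_map A \<Gamma>) \<xi>bar"
    and ii: "outer_semicontinuous_on D \<Gamma>"
    and iii: "semidifferentiable_at A \<xi>bar \<omega>"
    and iv: "closed ((\<lambda>w. A \<xi>bar *v w) ` sv_dom (\<Gamma> \<xi>bar))"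
    and c_nonneg: "c \<ge> 0"
    and v: "\<forall>z\<in>{z \<in> sphere 0 1 \<inter> sv_dom (\<Gamma> \<xi>bar). 0 \<in> Xi_map A \<Gamma> \<xi>bar z}.
              \<exists>\<epsilon>>0. \<exists>\<delta>>0. \<forall>\<xi> z'. \<xi> \<in> D \<and> z' \<in> sphere 0 1 \<and> dist (\<xi>, z') (\<xi>bar, z) \<le> \<epsilon> \<longrightarrow>
                 \<Gamma> \<xi> z' \<inter> cball 0 \<delta> \<subseteq> (\<Union>y\<in>\<Gamma> \<xi>bar z'. cball y (c * norm (\<xi> - \<xi>bar)))"
    and vi: "(\<lambda>w. A \<xi>bar *v w) ` sv_dom (\<Gamma> \<xi>bar)
               \<inter> uminus ` closure (cone_of (\<Union>z\<in>sphere 0 1 \<inter> sv_dom (\<Gamma> \<xi>bar). \<Gamma> \<xi>bar z)) \<subseteq> {0}"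
  shows "\<exists>z0\<in>{z \<in> sphere 0 1 \<inter> sv_dom (\<Gamma> \<xi>bar). 0 \<in> Xi_map A \<Gamma> \<xi>bar z}.
           (\<forall>z\<in>{z \<in> sphere 0 1 \<inter> sv_dom (\<Gamma> \<xi>bar). 0 \<in> Xi_map A \<Gamma> \<xi>bar z}.
              set_dist 0 {semiderivative A \<xi>bar \<omega> *v z0 + t + A \<xi>bar *v w | t w.
                   t \<in> closure (cone_of (\<Union>z\<in>sphere 0 1 \<inter> sv_dom (\<Gamma> \<xi>bar). \<Gamma> \<xi>bar z)) \<and> w \<in> sv_dom (\<Gamma> \<xi>bar)}
              \<le> set_dist 0 {semiderivative A \<xi>bar \<omega> *v z + t + A \<xi>bar *v w | t w.
                   t \<in> closure (cone_of (\<Union>z\<in>sphere 0 1 \<inter> sv_dom (\<Gamma> \<xi>bar). \<Gamma> \<xi>bar z)) \<and> w \<in> sv_dom (\<Gamma> \<xi>bar)})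
         \<and> subderivative (lsv D (Xi_map A \<Gamma>)) \<xi>bar \<omega> + ereal (c * norm \<omega>)
             \<ge> set_dist 0 {semiderivative A \<xi>bar \<omega> *v z0 + t + A \<xi>bar *v w | t w.
                   t \<in> closure (cone_of (\<Union>z\<in>sphere 0 1 \<inter> sv_dom (\<Gamma> \<xi>bar). \<Gamma> \<xi>bar z)) \<and> w \<in> sv_dom (\<Gamma> \<xi>bar)}"
proof -
  define Ab where "Ab = A \<xi>bar"
  define dm where "dm = sv_dom (\<Gamma> \<xi>bar)"
  define Z0 where "Z0 = {z \<in> sphere 0 1 \<inter> sv_dom (\<Gamma> \<xi>bar). 0 \<in> Xi_map A \<Gamma> \<xi>bar z}"
  define Th where "Th = closure (cone_of (\<Union>z\<in>sphere 0 1 \<inter> sv_dom (\<Gamma> \<xi>bar). \<Gamma> \<xi>bar z))"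
  define L where "L = semiderivative A \<xi>bar \<omega>"
  define T where "T = {t + Ab *v w | t w. t \<in> Th \<and> w \<in> dm}"
  define g where "g z = infdist (- (L *v z)) T" for z
  have hb: "pos_homogeneous (\<Gamma> \<xi>bar)" using hom xibar by blast
  have Xi0: "0 \<in> Xi_map A \<Gamma> \<xi> z \<longleftrightarrow> - (A \<xi> *v z) \<in> \<Gamma> \<xi> z" for \<xi> z
    unfolding Xi_map_def by (rule zero_in_shift)
  have Z0_eq: "Z0 = {z \<in> sphere 0 1. - (Ab *v z) \<in> \<Gamma> \<xi>bar z}"
    unfolding Z0_def Ab_def Xi0 sv_dom_def by auto
  have ThI: "r *\<^sub>R h \<in> Th" if "h \<in> \<Gamma> \<xi>bar z" "z \<in> sphere 0 1" "r \<ge> 0" for h z r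
  proof -
    have "h \<in> (\<Union>z\<in>sphere 0 1 \<inter> sv_dom (\<Gamma> \<xi>bar). \<Gamma> \<xi>bar z)"
      using that by (auto simp: sv_dom_def)
    then have "r *\<^sub>R h \<in> cone_of (\<Union>z\<in>sphere 0 1 \<inter> sv_dom (\<Gamma> \<xi>bar). \<Gamma> \<xi>bar z)"
      unfolding cone_of_def using that(3) by blast
    then show ?thesis unfolding Th_def using closure_subset by blast
  qed
  have dmI: "r *\<^sub>R w \<in> dm" if "w \<in> dm" "r > 0" for w r
    using that hb unfolding dm_def sv_dom_def pos_homogeneous_def by auto
  obtain z1 where z1: "z1 \<in> Z0"
  proof -
    from i obtain z where z: "z \<noteq> 0" "0 \<in> Xi_map A \<Gamma> \<xi>bar z"
      unfolding singular_point_def by blast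
    define z1 where "z1 = (1 / norm z) *\<^sub>R z"
    have "\<Gamma> \<xi>bar z1 = (\<lambda>y. (1 / norm z) *\<^sub>R y) ` \<Gamma> \<xi>bar z"
      using hb z(1) unfolding pos_homogeneous_def z1_def by simp
    moreover have "- (Ab *v z) \<in> \<Gamma> \<xi>bar z" using z(2) Xi0 Ab_def by simp
    ultimately have "(1 / norm z) *\<^sub>R (- (Ab *v z)) \<in> \<Gamma> \<xi>bar z1" by blast
    then have "- (Ab *v z1) \<in> \<Gamma> \<xi>bar z1"
      by (simp add: z1_def matrix_vector_mult_scaleR)
    moreover have "z1 \<in> sphere 0 1" using z(1) by (simp add: z1_def)
    ultimately show ?thesis using that Z0_eq by blast
  qed
  have T_ne: "T \<noteq> {}"
  proof -
    have z1s: "z1 \<in> sphere 0 1" and z1g: "- (Ab *v z1) \<in> \<Gamma> \<xi>bar z1"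
      using z1 unfolding Z0_eq by auto
    have a: "- (Ab *v z1) \<in> Th" using ThI[OF z1g z1s, of 1] by simp
    have b: "z1 \<in> dm" using z1g unfolding dm_def sv_dom_def by auto
    have "- (Ab *v z1) + Ab *v z1 \<in> T" unfolding T_def using a b by blast
    then show ?thesis by auto
  qed
  have SD: "set_dist 0 {semiderivative A \<xi>bar \<omega> *v z + t + A \<xi>bar *v w | t w.
                   t \<in> closure (cone_of (\<Union>z\<in>sphere 0 1 \<inter> sv_dom (\<Gamma> \<xi>bar). \<Gamma> \<xi>bar z)) \<and> w \<in> sv_dom (\<Gamma> \<xi>bar)}
            = ereal (g z)" for z
  proof -
    have eq: "{semiderivative A \<xi>bar \<omega> *v z + t + A \<xi>bar *v w | t w.
                   t \<in> closure (cone_of (\<Union>z\<in>sphere 0 1 \<inter> sv_dom (\<Gamma> \<xi>bar). \<Gamma> \<xi>bar z)) \<and> w \<in> sv_dom (\<Gamma> \<xi>bar)}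
           = (\<lambda>x. L *v z + x) ` T"
      unfolding T_def L_def Th_def Ab_def dm_def by (auto simp: add.assoc)
    show ?thesis unfolding eq set_dist_def g_def infdist_shift using T_ne by simp
  qed
  have osc_rule: "y \<in> \<Gamma> \<xi> z" if "\<xi> \<in> D" "\<forall>k. \<xi>s k \<in> D \<and> ys k \<in> \<Gamma> (\<xi>s k) (zs k)"
     "\<xi>s \<longlonglongrightarrow> \<xi>" "zs \<longlonglongrightarrow> z" "ys \<longlonglongrightarrow> y" for \<xi> z y \<xi>s zs ys
  proof -
    have "\<exists>\<xi>s zs ys. (\<forall>k. \<xi>s k \<in> D \<and> ys k \<in> \<Gamma> (\<xi>s k) (zs k)) \<and>
          \<xi>s \<longlonglongrightarrow> \<xi> \<and> zs \<longlonglongrightarrow> z \<and> ys \<longlonglongrightarrow> y"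
      using that(2-5) by blast
    then show ?thesis using ii that(1) unfolding outer_semicontinuous_on_def by blast
  qed
  have Z0_closed: "closed Z0"
    unfolding closed_sequential_limits
  proof (intro allI impI, elim conjE)
    fix x l assume x: "\<forall>n. x n \<in> Z0" and xl: "x \<longlonglongrightarrow> l"
    have xs: "\<forall>n. x n \<in> sphere 0 1" and xg: "\<forall>n. - (Ab *v x n) \<in> \<Gamma> \<xi>bar (x n)"
      using x unfolding Z0_eq by auto
    have "l \<in> sphere 0 1"
      by (rule Lim_in_closed_set[OF closed_sphere _ trivial_limit_sequentially xl]) (use xs in \<open>simp add: always_eventually\<close>)
    moreover have "- (Ab *v l) \<in> \<Gamma> \<xi>bar l"
    proof -
      have "(\<lambda>k. - (Ab *v x k)) \<longlonglongrightarrow> - (Ab *v l)"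
        by (intro tendsto_minus tendsto_mv tendsto_const xl)
      then show ?thesis
        using osc_rule[OF xibar _ tendsto_const xl, of "\<lambda>k. - (Ab *v x k)"] xg xibar by blast
    qed
    ultimately show "l \<in> Z0" by (simp add: Z0_eq)
  qed
  have Z0_compact: "compact Z0"
  proof -
    have "Z0 \<subseteq> sphere 0 1" unfolding Z0_eq by auto
    then have "bounded Z0" using bounded_subset[OF bounded_sphere] by blast
    then show ?thesis using Z0_closed by (simp add: compact_eq_bounded_closed)
  qed
  have g_cont: "continuous_on Z0 g"
    unfolding g_def by (intro continuous_intros)
  obtain z0 where z0: "z0 \<in> Z0" and z0min: "\<And>z. z \<in> Z0 \<Longrightarrow> g z0 \<le> g z"
    using continuous_attains_inf[OF Z0_compact _ g_cont] z1 by blast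
  have MAIN: "subderivative (lsv D (Xi_map A \<Gamma>)) \<xi>bar \<omega> + ereal (c * norm \<omega>) \<ge> ereal (g z0)"
  proof -
    define F where "F = semi_filter \<omega>"
    define \<phi> where "\<phi> = lsv D (Xi_map A \<Gamma>)"
    define Q where "Q = (\<lambda>(\<tau>::real, \<omega>'). (\<phi> (\<xi>bar + \<tau> *\<^sub>R \<omega>') - \<phi> \<xi>bar) / ereal \<tau>)"
    have Fnb: "F \<noteq> bot"
    proof -
      have "(0, \<omega>) islimpt ({0<..} \<times> UNIV :: (real \<times> _) set)"
        unfolding islimpt_approachable
      proof (intro allI impI)
        fix e :: real assume e: "e > 0"
        show "\<exists>x'\<in>{0<..} \<times> UNIV. x' \<noteq> ((0::real), \<omega>) \<and> dist x' (0, \<omega>) < e"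
        proof (rule bexI[where x="(e/2, \<omega>)"])
          have "dist (e/2, \<omega>) (0, \<omega>) = e/2" using e by (simp add: dist_Pair_Pair)
          then show "(e/2, \<omega>) \<noteq> (0, \<omega>) \<and> dist (e/2, \<omega>) (0, \<omega>) < e" using e by simp
          show "(e/2, \<omega>) \<in> {0<..} \<times> UNIV" using e by simp
        qed
      qed
      then show ?thesis unfolding F_def semi_filter_def using trivial_limit_within by blast
    qed
    define Gq where "Gq = (\<lambda>(\<tau>::real, \<omega>'). (1 / \<tau>) *\<^sub>R (A (\<xi>bar + \<tau> *\<^sub>R \<omega>') - A \<xi>bar))"
    from iii obtain L0 where L0: "(Gq \<longlongrightarrow> L0) F"
      unfolding semidifferentiable_at_def Gq_def F_def by blast
    have LL: "(Gq \<longlongrightarrow> L) F"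
    proof -
      have "L = L0" unfolding L_def semiderivative_def
        using L0 tendsto_unique[OF Fnb] unfolding Gq_def F_def by blast
      then show ?thesis using L0 by simp
    qed
    have phi0: "\<phi> \<xi>bar = 0"
    proof -
      have z1': "z1 \<in> sphere 0 1" "- (Ab *v z1) \<in> \<Gamma> \<xi>bar z1" using z1 Z0_eq by auto
      have "0 \<in> Xi_map A \<Gamma> \<xi>bar z1" using z1' Xi0 Ab_def by simp
      then have "set_dist 0 (Xi_map A \<Gamma> \<xi>bar z1) = 0"
        unfolding set_dist_def by (auto simp: zero_ereal_def)
      then have "(INF z\<in>sphere 0 1. set_dist 0 (Xi_map A \<Gamma> \<xi>bar z)) \<le> 0"
        using z1'(1) by (metis INF_lower)
      moreover have "(INF z\<in>sphere 0 1. set_dist 0 (Xi_map A \<Gamma> \<xi>bar z)) \<ge> 0"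
        by (rule INF_greatest) (auto simp: set_dist_def infdist_nonneg)
      ultimately show ?thesis unfolding \<phi>_def lsv_def using xibar by simp
    qed
    have core: "g z0 - c * norm \<omega> \<le> y"
      if tpos: "\<forall>k. \<tau>s k > 0" and tlim: "\<tau>s \<longlonglongrightarrow> 0" and wlim: "\<omega>s \<longlonglongrightarrow> \<omega>"
        and inD: "\<forall>k. \<xi>bar + \<tau>s k *\<^sub>R \<omega>s k \<in> D" and zsph: "\<forall>k. zs k \<in> sphere 0 1"
        and zlim: "zs \<longlonglongrightarrow> zbar" and yin: "\<forall>k. ys k \<in> \<Gamma> (\<xi>bar + \<tau>s k *\<^sub>R \<omega>s k) (zs k)"
        and elim: "es \<longlonglongrightarrow> 0"
        and bnd: "\<forall>k. norm (A (\<xi>bar + \<tau>s k *\<^sub>R \<omega>s k) *v zs k + ys k) \<le> (y + es k) * \<tau>s k"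
      for \<tau>s \<omega>s zs zbar ys es and y :: real
    proof -
      define xk where "xk k = \<xi>bar + \<tau>s k *\<^sub>R \<omega>s k" for k
      define Dk where "Dk k = (1 / \<tau>s k) *\<^sub>R (A (xk k) - Ab)" for k
      have "filterlim (\<lambda>k. (\<tau>s k, \<omega>s k)) F sequentially"
        unfolding F_def semi_filter_def filterlim_at
      proof
        show "\<forall>\<^sub>F k in sequentially. (\<tau>s k, \<omega>s k) \<in> {0<..} \<times> UNIV \<and> (\<tau>s k, \<omega>s k) \<noteq> (0, \<omega>)"
        proof (rule always_eventually, rule allI)
          fix k have "\<tau>s k > 0" using tpos by simp
          then show "(\<tau>s k, \<omega>s k) \<in> {0<..} \<times> UNIV \<and> (\<tau>s k, \<omega>s k) \<noteq> (0, \<omega>)" by simp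
        qed
        show "((\<lambda>k. (\<tau>s k, \<omega>s k)) \<longlongrightarrow> (0, \<omega>)) sequentially"
          by (intro tendsto_Pair tlim wlim)
      qed
      from filterlim_compose[OF LL this] have Dlim: "Dk \<longlonglongrightarrow> L"
        unfolding Dk_def[abs_def] xk_def Ab_def by (simp add: Gq_def)
      have Axk: "A (xk k) = Ab + \<tau>s k *\<^sub>R Dk k" for k
        using tpos[rule_format, of k] by (simp add: Dk_def)
      have Alim: "(\<lambda>k. A (xk k)) \<longlonglongrightarrow> Ab"
        unfolding Axk using tendsto_add[OF tendsto_const tendsto_scaleR[OF tlim Dlim], of Ab] by simp
      have xlim: "xk \<longlonglongrightarrow> \<xi>bar"
        unfolding xk_def using tendsto_add[OF tendsto_const tendsto_scaleR[OF tlim wlim], of \<xi>bar] by simp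
      have AZ: "(\<lambda>k. A (xk k) *v zs k) \<longlonglongrightarrow> Ab *v zbar"
        by (rule tendsto_mv[OF Alim zlim])
      have R: "(\<lambda>k. A (xk k) *v zs k + ys k) \<longlonglongrightarrow> 0"
      proof (rule Lim_null_comparison)
        show "\<forall>\<^sub>F k in sequentially. norm (A (xk k) *v zs k + ys k) \<le> (y + es k) * \<tau>s k"
          using bnd by (simp add: xk_def)
        show "(\<lambda>k. (y + es k) * \<tau>s k) \<longlonglongrightarrow> 0"
          using tendsto_mult[OF tendsto_add[OF tendsto_const elim] tlim, of y] by simp
      qed
      have ylim: "ys \<longlonglongrightarrow> - (Ab *v zbar)"
        using tendsto_diff[OF R AZ] by simp
      have zbar_sph: "zbar \<in> sphere 0 1"
        using zsph zlim by (intro Lim_in_closed_set[of "sphere 0 1" zs sequentially zbar]) auto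
      have osc: "- (Ab *v zbar) \<in> \<Gamma> \<xi>bar zbar"
        by (rule osc_rule[OF xibar _ xlim zlim ylim]) (use inD yin in \<open>simp add: xk_def\<close>)
      have zbarZ0: "zbar \<in> Z0" using zbar_sph osc Z0_eq by simp
      have Az0: "Ab *v zbar = 0"
      proof -
        have "zbar \<in> sv_dom (\<Gamma> \<xi>bar)" using osc by (auto simp: sv_dom_def)
        then have m1: "Ab *v zbar \<in> (\<lambda>w. A \<xi>bar *v w) ` sv_dom (\<Gamma> \<xi>bar)" by (auto simp: Ab_def)
        have "1 *\<^sub>R (- (Ab *v zbar)) \<in> Th" by (rule ThI[OF osc zbar_sph]) simp
        then have "Ab *v zbar \<in> uminus ` Th" by (simp add: image_iff) (metis minus_minus)
        then show ?thesis using vi m1 unfolding Th_def by blast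
      qed
      have ylim0: "ys \<longlonglongrightarrow> 0" using ylim Az0 by simp
      have "zbar \<in> {z \<in> sphere 0 1 \<inter> sv_dom (\<Gamma> \<xi>bar). 0 \<in> Xi_map A \<Gamma> \<xi>bar z}"
        using zbarZ0 unfolding Z0_def .
      from bspec[OF v this] obtain \<epsilon> \<delta> where "\<epsilon> > 0" "\<delta> > 0" and vv0:
        "\<forall>\<xi> z'. \<xi> \<in> D \<and> z' \<in> sphere 0 1 \<and> dist (\<xi>, z') (\<xi>bar, zbar) \<le> \<epsilon> \<longrightarrow>
           \<Gamma> \<xi> z' \<inter> cball 0 \<delta> \<subseteq> (\<Union>y\<in>\<Gamma> \<xi>bar z'. cball y (c * norm (\<xi> - \<xi>bar)))"
        by auto
      have vv: "\<Gamma> \<xi> z' \<inter> cball 0 \<delta> \<subseteq> (\<Union>y\<in>\<Gamma> \<xi>bar z'. cball y (c * norm (\<xi> - \<xi>bar)))"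
        if "\<xi> \<in> D" "z' \<in> sphere 0 1" "dist (\<xi>, z') (\<xi>bar, zbar) \<le> \<epsilon>" for \<xi> z'
        using vv0 that by blast
      have ev1: "\<forall>\<^sub>F k in sequentially. dist (xk k, zs k) (\<xi>bar, zbar) < \<epsilon>"
        using tendstoD[OF tendsto_Pair[OF xlim zlim] \<open>\<epsilon> > 0\<close>] .
      have ev2: "\<forall>\<^sub>F k in sequentially. dist (ys k) 0 < \<delta>"
        using tendstoD[OF ylim0 \<open>\<delta> > 0\<close>] .
      have ev3: "\<forall>\<^sub>F k in sequentially. g z0 \<le> y + es k + norm (L *v zbar - Dk k *v zs k) + c * norm (\<omega>s k)"
        using eventually_conj[OF ev1 ev2]
      proof (rule eventually_mono, elim conjE)
        fix k assume d1: "dist (xk k, zs k) (\<xi>bar, zbar) < \<epsilon>" and d2: "dist (ys k) 0 < \<delta>"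
        define \<tau> where "\<tau> = \<tau>s k"
        have tp: "\<tau> > 0" using tpos \<tau>_def by simp
        have "ys k \<in> \<Gamma> (xk k) (zs k) \<inter> cball 0 \<delta>"
          using yin d2 by (auto simp: xk_def dist_commute)
        then have "ys k \<in> (\<Union>y\<in>\<Gamma> \<xi>bar (zs k). cball y (c * norm (xk k - \<xi>bar)))"
          using vv[of "xk k" "zs k"] inD zsph d1 by (force simp: xk_def)
        then obtain h where hG: "h \<in> \<Gamma> \<xi>bar (zs k)" and hd: "dist h (ys k) \<le> c * norm (xk k - \<xi>bar)"
          by auto
        have nx: "norm (xk k - \<xi>bar) = \<tau> * norm (\<omega>s k)"
          using tp by (simp add: xk_def \<tau>_def)
        have tTh: "(1 / \<tau>) *\<^sub>R h \<in> Th" using ThI[OF hG] zsph tp by simp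
        have wdm: "(1 / \<tau>) *\<^sub>R zs k \<in> dm"
          using dmI[of "zs k" "1/\<tau>"] hG tp by (auto simp: dm_def sv_dom_def)
        define p where "p = L *v zbar + ((1 / \<tau>) *\<^sub>R h + Ab *v ((1 / \<tau>) *\<^sub>R zs k))"
        have "(1 / \<tau>) *\<^sub>R h + Ab *v ((1 / \<tau>) *\<^sub>R zs k) \<in> T"
          unfolding T_def using tTh wdm by blast
        then have "g zbar \<le> dist (- (L *v zbar)) ((1 / \<tau>) *\<^sub>R h + Ab *v ((1 / \<tau>) *\<^sub>R zs k))"
          unfolding g_def by (rule infdist_le)
        also have "\<dots> = norm p"
          unfolding p_def dist_norm by (metis minus_add_distrib norm_minus_cancel diff_conv_add_uminus)
        finally have gp: "g z0 \<le> norm p" using z0min[OF zbarZ0] by simp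
        have eq: "\<tau> *\<^sub>R p = (A (xk k) *v zs k + ys k) + \<tau> *\<^sub>R (L *v zbar - Dk k *v zs k) - (ys k - h)"
          using tp unfolding p_def Axk \<tau>_def[symmetric]
          by (simp add: algebra_simps scaleR_mv)
        have "\<tau> * norm p = norm (\<tau> *\<^sub>R p)" using tp by simp
        also have "\<dots> \<le> norm (A (xk k) *v zs k + ys k) + \<tau> * norm (L *v zbar - Dk k *v zs k) + norm (ys k - h)"
        proof -
          let ?X = "A (xk k) *v zs k + ys k" and ?B = "L *v zbar - Dk k *v zs k" and ?W = "ys k - h"
          have t1: "norm (?X + \<tau> *\<^sub>R ?B - ?W) \<le> norm (?X + \<tau> *\<^sub>R ?B) + norm ?W" by (rule norm_triangle_ineq4)
          have t2: "norm (?X + \<tau> *\<^sub>R ?B) \<le> norm ?X + norm (\<tau> *\<^sub>R ?B)" by (rule norm_triangle_ineq)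
          have t3: "norm (\<tau> *\<^sub>R ?B) = \<tau> * norm ?B" using tp by simp
          show ?thesis unfolding eq using t1 t2 t3 by linarith
        qed
        also have "\<dots> \<le> (y + es k) * \<tau> + \<tau> * norm (L *v zbar - Dk k *v zs k) + c * (\<tau> * norm (\<omega>s k))"
          using bnd hd nx unfolding xk_def \<tau>_def by (intro add_mono) (auto simp: dist_norm norm_minus_commute)
        also have "\<dots> = \<tau> * (y + es k + norm (L *v zbar - Dk k *v zs k) + c * norm (\<omega>s k))"
          by (simp add: algebra_simps)
        finally have "norm p \<le> y + es k + norm (L *v zbar - Dk k *v zs k) + c * norm (\<omega>s k)"
          using tp by simp
        then show "g z0 \<le> y + es k + norm (L *v zbar - Dk k *v zs k) + c * norm (\<omega>s k)"
          using gp by simp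
      qed
      have lim3: "(\<lambda>k. y + es k + norm (L *v zbar - Dk k *v zs k) + c * norm (\<omega>s k))
                   \<longlonglongrightarrow> y + 0 + norm (L *v zbar - L *v zbar) + c * norm \<omega>"
        by (intro tendsto_intros elim tendsto_mv Dlim zlim wlim)
      have "g z0 \<le> y + 0 + norm (L *v zbar - L *v zbar) + c * norm \<omega>"
        by (rule tendsto_lowerbound[OF lim3 ev3 trivial_limit_sequentially])
      then show ?thesis by simp
    qed
    have evQ: "eventually (\<lambda>x. ereal y < Q x) F" if ylt: "y < g z0 - c * norm \<omega>" for y
    proof (rule ccontr)
      assume neg: "\<not> (\<forall>\<^sub>F x in F. ereal y < Q x)"
      have ex: "\<exists>x. x \<in> {0<..} \<times> UNIV \<and> x \<noteq> (0, \<omega>) \<and> dist x (0, \<omega>) < 1 / real (Suc k) \<and> \<not> ereal y < Q x" for k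
      proof -
        have pos: "1 / real (Suc k) > 0" by simp
        have "\<not> (\<exists>d>0. \<forall>x\<in>{0<..} \<times> UNIV. x \<noteq> (0, \<omega>) \<and> dist x (0, \<omega>) < d \<longrightarrow> ereal y < Q x)"
          using neg unfolding F_def semi_filter_def eventually_at .
        then have "\<not> (\<forall>x\<in>{0<..} \<times> UNIV. x \<noteq> (0, \<omega>) \<and> dist x (0, \<omega>) < 1 / real (Suc k) \<longrightarrow> ereal y < Q x)"
          using pos by blast
        then show ?thesis by blast
      qed
      from choice[OF allI[OF ex]] obtain X where X: "\<forall>k. X k \<in> {0<..} \<times> UNIV \<and> X k \<noteq> (0, \<omega>) \<and>
          dist (X k) (0, \<omega>) < 1 / real (Suc k) \<and> \<not> ereal y < Q (X k)"
        by (rule exE)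
      define \<tau>s where "\<tau>s k = fst (X k)" for k
      define \<omega>s where "\<omega>s k = snd (X k)" for k
      have Xeq: "X k = (\<tau>s k, \<omega>s k)" for k by (simp add: \<tau>s_def \<omega>s_def)
      have tpos: "\<forall>k. \<tau>s k > 0"
      proof
        fix k show "\<tau>s k > 0" using X[rule_format, of k] unfolding Xeq by auto
      qed
      have einv: "(\<lambda>k. 1 / real (Suc k)) \<longlonglongrightarrow> 0"
        using LIMSEQ_Suc[OF lim_inverse_n'] by simp
      have Xlim: "X \<longlonglongrightarrow> (0, \<omega>)"
      proof -
        have "(\<lambda>k. dist (X k) (0, \<omega>)) \<longlonglongrightarrow> 0"
        proof (rule Lim_null_comparison[OF _ einv])
          show "\<forall>\<^sub>F k in sequentially. norm (dist (X k) (0, \<omega>)) \<le> 1 / real (Suc k)"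
          proof (rule always_eventually, rule allI)
            fix k show "norm (dist (X k) (0, \<omega>)) \<le> 1 / real (Suc k)"
              using X[rule_format, of k] by simp
          qed
        qed
        then show ?thesis using tendsto_dist_iff by blast
      qed
      have tlim: "\<tau>s \<longlonglongrightarrow> 0"
        using tendsto_fst[OF Xlim] unfolding \<tau>s_def[abs_def] by simp
      have wlim: "\<omega>s \<longlonglongrightarrow> \<omega>"
        using tendsto_snd[OF Xlim] unfolding \<omega>s_def[abs_def] by simp
      have step: "\<exists>zy. \<xi>bar + \<tau>s k *\<^sub>R \<omega>s k \<in> D \<and> fst zy \<in> sphere 0 1 \<and>
          snd zy \<in> \<Gamma> (\<xi>bar + \<tau>s k *\<^sub>R \<omega>s k) (fst zy) \<and>
          norm (A (\<xi>bar + \<tau>s k *\<^sub>R \<omega>s k) *v fst zy + snd zy) \<le> (y + 1 / real (Suc k)) * \<tau>s k" for k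
      proof -
        define x where "x = \<xi>bar + \<tau>s k *\<^sub>R \<omega>s k"
        define r where "r = (y + 1 / real (Suc k)) * \<tau>s k"
        have tp: "\<tau>s k > 0" using tpos by simp
        have "\<not> ereal y < Q (X k)" using X[rule_format, of k] by (elim conjE)
        then have "\<phi> x / ereal (\<tau>s k) \<le> ereal y"
          by (simp add: Q_def Xeq phi0 x_def not_less)
        then have "\<phi> x \<le> ereal (\<tau>s k) * ereal y"
          using ereal_divide_le_pos[of "ereal (\<tau>s k)" "\<phi> x" "ereal y"] tp by simp
        also have "\<dots> < ereal r"
          using tp by (simp add: r_def algebra_simps)
        finally have lt: "\<phi> x < ereal r" .
        then have inD: "x \<in> D" unfolding \<phi>_def lsv_def by (auto split: if_splits)
        then have "(INF z\<in>sphere 0 1. set_dist 0 (Xi_map A \<Gamma> x z)) < ereal r"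
          using lt unfolding \<phi>_def lsv_def by simp
        then obtain z where z: "z \<in> sphere 0 1" "set_dist 0 (Xi_map A \<Gamma> x z) < ereal r"
          by (auto simp: INF_less_iff)
        then have ne: "Xi_map A \<Gamma> x z \<noteq> {}" and idl: "infdist 0 (Xi_map A \<Gamma> x z) < r"
          unfolding set_dist_def by (auto split: if_splits)
        have bdd: "bdd_below ((\<lambda>a. dist 0 a) ` Xi_map A \<Gamma> x z)"
          by (rule bdd_belowI[of _ 0]) auto
        have "(INF a\<in>Xi_map A \<Gamma> x z. dist 0 a) < r"
          using idl infdist_notempty[OF ne] by simp
        then obtain p where p: "p \<in> Xi_map A \<Gamma> x z" "dist 0 p < r"
          using cINF_less_iff[OF ne bdd] by blast
        then obtain yy where yy: "yy \<in> \<Gamma> x z" "p = A x *v z + yy"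
          unfolding Xi_map_def by blast
        have "norm (A x *v z + yy) \<le> r" using p yy by (metis dist_0_norm less_imp_le)
        then show ?thesis
          using inD z yy unfolding x_def r_def by (intro exI[of _ "(z, yy)"]) simp
      qed
      from choice[OF allI[OF step]] obtain ZY where ZY: "\<forall>k. \<xi>bar + \<tau>s k *\<^sub>R \<omega>s k \<in> D \<and> fst (ZY k) \<in> sphere 0 1 \<and>
          snd (ZY k) \<in> \<Gamma> (\<xi>bar + \<tau>s k *\<^sub>R \<omega>s k) (fst (ZY k)) \<and>
          norm (A (\<xi>bar + \<tau>s k *\<^sub>R \<omega>s k) *v fst (ZY k) + snd (ZY k)) \<le> (y + 1 / real (Suc k)) * \<tau>s k"
        by (rule exE)
      define zs where "zs k = fst (ZY k)" for k
      define ys where "ys k = snd (ZY k)" for k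
      have zsph: "\<forall>k. zs k \<in> sphere 0 1" using ZY zs_def by simp
      obtain zbar rr where rr: "strict_mono rr" and zlim: "(zs \<circ> rr) \<longlonglongrightarrow> zbar"
        using seq_compactE[OF compact_imp_seq_compact[OF compact_sphere] zsph] by metis
      have a1: "\<forall>k. (\<tau>s \<circ> rr) k > 0" using tpos by simp
      have a2: "(\<tau>s \<circ> rr) \<longlonglongrightarrow> 0" by (rule LIMSEQ_subseq_LIMSEQ[OF tlim rr])
      have a3: "(\<omega>s \<circ> rr) \<longlonglongrightarrow> \<omega>" by (rule LIMSEQ_subseq_LIMSEQ[OF wlim rr])
      have a4: "\<forall>k. \<xi>bar + (\<tau>s \<circ> rr) k *\<^sub>R (\<omega>s \<circ> rr) k \<in> D" using ZY by simp
      have a5: "\<forall>k. (zs \<circ> rr) k \<in> sphere 0 1" using zsph by simp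
      have a7: "\<forall>k. (ys \<circ> rr) k \<in> \<Gamma> (\<xi>bar + (\<tau>s \<circ> rr) k *\<^sub>R (\<omega>s \<circ> rr) k) ((zs \<circ> rr) k)"
        using ZY by (simp add: zs_def ys_def)
      have a8: "((\<lambda>k. 1 / real (Suc k)) \<circ> rr) \<longlonglongrightarrow> 0" by (rule LIMSEQ_subseq_LIMSEQ[OF einv rr])
      have a9: "\<forall>k. norm (A (\<xi>bar + (\<tau>s \<circ> rr) k *\<^sub>R (\<omega>s \<circ> rr) k) *v (zs \<circ> rr) k + (ys \<circ> rr) k)
                 \<le> (y + ((\<lambda>k. 1 / real (Suc k)) \<circ> rr) k) * (\<tau>s \<circ> rr) k"
        using ZY by (simp add: zs_def ys_def)
      have "g z0 - c * norm \<omega> \<le> y" by (rule core[OF a1 a2 a3 a4 a5 zlim a7 a8 a9])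
      then show False using ylt by simp
    qed
    have "ereal (g z0 - c * norm \<omega>) \<le> Liminf F Q"
      unfolding le_Liminf_iff
    proof (intro allI impI)
      fix y' assume y': "y' < ereal (g z0 - c * norm \<omega>)"
      show "\<forall>\<^sub>F x in F. y' < Q x"
      proof (cases y')
        case (real r)
        then show ?thesis using evQ[of r] y' by simp
      next
        case PInf then show ?thesis using y' by simp
      next
        case MInf
        have "\<forall>\<^sub>F x in F. ereal (g z0 - c * norm \<omega> - 1) < Q x" by (rule evQ) simp
        then show ?thesis by (rule eventually_mono) (auto simp: MInf)
      qed
    qed
    moreover have "subderivative (lsv D (Xi_map A \<Gamma>)) \<xi>bar \<omega> = Liminf F Q"
      unfolding subderivative_def F_def Q_def \<phi>_def ..
    ultimately show ?thesis
      by (cases "Liminf F Q") (auto simp: algebra_simps)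
  qed
  show ?thesis
    unfolding SD using z0 z0min MAIN unfolding Z0_def by auto
qed

end
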